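(* Let $\Gamma$, $\varepsilon$, $q$, $E$, $\{e_i:i\in I\}$, $p$, $\pi$ and $R$ be as follows: $\varepsilon$ is a commutation factor on the abelian group $\Gamma$ which can be written as $\varepsilon(\alpha,\beta)=(-1)^{\pi(\alpha)\pi(\beta)}\sigma(\alpha,\beta)/\sigma(\beta,\alpha)$ for some map $\sigma:\Gamma\times\Gamma\to\mathbb{C}\setminus\{0\}$; $E$ is a finite-dimensional $\Gamma$-graded complex vector space with homogeneous basis $\{e_i\}_{i\in I}$, $I$ totally ordered, $\deg e_i=p(i)$; and $R$ is the color Hecke $R$-matrix $$R(e_i\otimes e_j)=\begin{cases} q^{1-2\pi(p(i))}\varepsilon(p(i),p(i))\, e_i\otimes e_i, & i=j,\\ (q-q^{-1})e_i\otimes e_j+\varepsilon(p(i),p(j))\,e_j\otimes e_i, & i<j,\\ \varepsilon(p(i),p(j))\,e_j\otimes e_i,& i>j.\end{cases}$$ Let $\bar R$ be the super (i.e. $\mathbb{Z}_2$-graded) Hecke $R$-matrix on the same space with the $\mathbb{Z}_2$-grading $\delta=\pi\circ p$: $$\bar R(e_i\otimes e_j)=\begin{cases} (-1)^{\delta(i)}q^{1-2\delta(i)}\, e_i\otimes e_i, & i=j,\\ (q-q^{-1})e_i\otimes e_j+(-1)^{\delta(i)\delta(j)}e_j\otimes e_i, & i<j,\\ (-1)^{\delta(i)\delta(j)}e_j\otimes e_i,& i>j,\end{cases}$$ and let $F:E\otimes E\to E\otimes E$ be the invertible diagonal map $F(e_i\otimes e_j)=\sigma(p(i),p(j))\,e_i\otimes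 e_j$. Then $R=F^{-1}\circ\bar R\circ F$; that is, the color Hecke $R$-matrix is obtained from the $\mathbb{Z}_2$-graded Hecke $R$-matrix by the twist determined by $\sigma$ (equivalently, by tensoring with the color exchange operator $\rho_\alpha\otimes\rho_\beta\mapsto \frac{\sigma(\alpha,\beta)}{\sigma(\beta,\alpha)}\rho_\beta\otimes\rho_\alpha$ on the degree-tracking factors).
   Context: A commutation factor on $\Gamma$ is a map $\varepsilon:\Gamma\times\Gamma\to\mathbb{C}\setminus\{0\}$ with $\varepsilon(\alpha,\beta)\varepsilon(\beta,\alpha)=1$ and $\varepsilon(\alpha+\beta,\gamma)=\varepsilon(\alpha,\gamma)\varepsilon(\beta,\gamma)$. $\pi:\Gamma\to\{0,1\}$ is defined by $\pi(\alpha)=0$ if $\varepsilon(\alpha,\alpha)=1$ and $\pi(\alpha)=1$ if $\varepsilon(\alpha,\alpha)=-1$; $\Gamma_0=\pi^{-1}(0)$ is a subgroup of index at most 2 and $\pi$ is the quotient map $\Gamma\to\Gamma/\Gamma_0\subseteq\mathbb{Z}_2$. $q\in\mathbb{C}\setminus\{0\}$. *)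

theory Defs
  imports Complex_Main
begin

definition commutation_factor :: "('g::ab_group_add \<Rightarrow> 'g \<Rightarrow> complex) \<Rightarrow> bool" where
  "commutation_factor \<epsilon> \<longleftrightarrow>
     (\<forall>a b. \<epsilon> a b \<noteq> 0) \<and>
     (\<forall>a b. \<epsilon> a b * \<epsilon> b a = 1) \<and>
     (\<forall>a b c. \<epsilon> (a + b) c = \<epsilon> a c * \<epsilon> b c)"

definition par :: "('g \<Rightarrow> 'g \<Rightarrow> complex) \<Rightarrow> 'g \<Rightarrow> nat" where
  "par \<epsilon> a = (if \<epsilon> a a = 1 then 0 else 1)"

text \<open>Linear operators on E (x) E, with E having basis e_i indexed by a finite
  linearly ordered type 'i, are represented by their matrices:
  T (i,j) is the coefficient vector of T(e_i (x) e_j) in the basis e_k (x) e_l.\<close>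
type_synonym 'i op2 = "'i \<times> 'i \<Rightarrow> 'i \<times> 'i \<Rightarrow> complex"

text \<open>Composition: (comp2 A B) = A after B.\<close>
definition comp2 :: "('i::finite) op2 \<Rightarrow> 'i op2 \<Rightarrow> 'i op2" where
  "comp2 A B x = (\<lambda>z. \<Sum>y\<in>UNIV. B x y * A y z)"

definition colorR :: "complex \<Rightarrow> ('g::ab_group_add \<Rightarrow> 'g \<Rightarrow> complex) \<Rightarrow> ('i::linorder \<Rightarrow> 'g) \<Rightarrow> 'i op2" where
  "colorR q \<epsilon> p = (\<lambda>(i,j) z.
     if i = j then (if z = (i,i) then q powi (1 - 2 * int (par \<epsilon> (p i))) * \<epsilon> (p i) (p i) else 0)
     else if i < j then (if z = (i,j) then q - inverse q else 0)
                       + (if z = (j,i) then \<epsilon> (p i) (p j) else 0)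
     else (if z = (j,i) then \<epsilon> (p i) (p j) else 0))"

definition superR :: "complex \<Rightarrow> ('i::linorder \<Rightarrow> nat) \<Rightarrow> 'i op2" where
  "superR q \<delta> = (\<lambda>(i,j) z.
     if i = j then (if z = (i,i) then (-1) ^ \<delta> i * q powi (1 - 2 * int (\<delta> i)) else 0)
     else if i < j then (if z = (i,j) then q - inverse q else 0)
                       + (if z = (j,i) then (-1) ^ (\<delta> i * \<delta> j) else 0)
     else (if z = (j,i) then (-1) ^ (\<delta> i * \<delta> j) else 0))"

definition twistF :: "('g \<Rightarrow> 'g \<Rightarrow> complex) \<Rightarrow> ('i \<Rightarrow> 'g) \<Rightarrow> 'i op2" where
  "twistF \<sigma> p = (\<lambda>(i,j) z. if z = (i,j) then \<sigma> (p i) (p j) else 0)"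

definition twistF_inv :: "('g \<Rightarrow> 'g \<Rightarrow> complex) \<Rightarrow> ('i \<Rightarrow> 'g) \<Rightarrow> 'i op2" where
  "twistF_inv \<sigma> p = (\<lambda>(i,j) z. if z = (i,j) then inverse (\<sigma> (p i) (p j)) else 0)"

end

theory Submission
  imports Defs
begin

lemma comp_F: "comp2 A (twistF \<sigma> p) (i,j) = (\<lambda>z. \<sigma> (p i) (p j) * A (i,j) z)"
proof
  fix z
  have "(\<Sum>y\<in>UNIV. twistF \<sigma> p (i,j) y * A y z) = (\<Sum>y\<in>UNIV. if y = (i,j) then \<sigma> (p i) (p j) * A y z else 0)"
    by (rule sum.cong) (auto simp: twistF_def)
  thus "comp2 A (twistF \<sigma> p) (i,j) z = \<sigma> (p i) (p j) * A (i,j) z"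
    unfolding comp2_def by simp
qed

lemma comp_Finv: "comp2 (twistF_inv \<sigma> p) B x = (\<lambda>(k,l). B x (k,l) * inverse (\<sigma> (p k) (p l)))"
proof
  fix z :: "'a \<times> 'a"
  obtain k l where z: "z = (k,l)" by fastforce
  have "(\<Sum>y\<in>UNIV. B x y * twistF_inv \<sigma> p y z) = (\<Sum>y\<in>UNIV. if y = (k,l) then B x y * inverse (\<sigma> (p k) (p l)) else 0)"
    by (rule sum.cong) (auto simp: twistF_inv_def z split: if_splits)
  thus "comp2 (twistF_inv \<sigma> p) B x z = (\<lambda>(k,l). B x (k,l) * inverse (\<sigma> (p k) (p l))) z"
    unfolding comp2_def z by simp
qed

lemma eps_sq:
  assumes "commutation_factor \<epsilon>"
  shows "\<epsilon> a a = (-1) ^ par \<epsilon> a"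
proof -
  have "\<epsilon> a a * \<epsilon> a a = 1" using assms unfolding commutation_factor_def by blast
  hence "\<epsilon> a a = 1 \<or> \<epsilon> a a = -1"
    by (metis power2_eq_1_iff power2_eq_square)
  thus ?thesis unfolding par_def by auto
qed

theorem mainTheorem4:
  fixes \<epsilon> \<sigma> :: "'g::ab_group_add \<Rightarrow> 'g \<Rightarrow> complex"
    and q :: complex
    and p :: "'i::{finite,linorder} \<Rightarrow> 'g"
  assumes "commutation_factor \<epsilon>"
    and "\<forall>a b. \<sigma> a b \<noteq> 0"
    and "\<forall>a b. \<epsilon> a b = (-1) ^ (par \<epsilon> a * par \<epsilon> b) * \<sigma> a b / \<sigma> b a"
    and "q \<noteq> 0"
  shows "colorR q \<epsilon> p = comp2 (twistF_inv \<sigma> p) (comp2 (superR q (\<lambda>i. par \<epsilon> (p i))) (twistF \<sigma> p))"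
proof (rule ext, rule ext)
  fix x z :: "'i \<times> 'i"
  obtain i j where x: "x = (i,j)" by fastforce
  obtain k l where z: "z = (k,l)" by fastforce
  have s: "\<sigma> a b \<noteq> 0" for a b using assms(2) by blast
  have e: "\<epsilon> a b = (-1) ^ (par \<epsilon> a * par \<epsilon> b) * \<sigma> a b / \<sigma> b a" for a b using assms(3) by blast
  have "colorR q \<epsilon> p (i,j) (k,l) = comp2 (twistF_inv \<sigma> p) (comp2 (superR q (\<lambda>i. par \<epsilon> (p i))) (twistF \<sigma> p)) (i,j) (k,l)"
  proof (cases "par \<epsilon> (p i) = 0")
    case True
    then show ?thesis using s eps_sq[OF assms(1), of "p i"] e[of "p i" "p j"]
      by (auto simp: comp_Finv comp_F colorR_def superR_def field_simps)
  next
    case False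
    then have "par \<epsilon> (p i) = 1" unfolding par_def by (auto split: if_splits)
    then show ?thesis using s eps_sq[OF assms(1), of "p i"] e[of "p i" "p j"]
      by (auto simp: comp_Finv comp_F colorR_def superR_def field_simps)
  qed
  then show "colorR q \<epsilon> p x z = comp2 (twistF_inv \<sigma> p) (comp2 (superR q (\<lambda>i. par \<epsilon> (p i))) (twistF \<sigma> p)) x z"
    by (simp add: x z)
qed

end
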